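(* Let $L$ be a positive integer and let $X$ and $X_{\mathcal{K}}$, $\mathcal{K}\subseteq\mathcal{I}_L$, be jointly distributed random variables on finite sets with an arbitrary fixed joint distribution. Then the rate region $\{(R_1,\dots,R_L)\in\mathbb{R}^L: R_{\mathcal{K}}\ge\psi(\mathcal{K})\text{ for all }\emptyset\subset\mathcal{K}\subseteq\mathcal{I}_L\}$ is a contra-polymatroid.
   Context: $\mathcal{I}_L=\{1,\dots,L\}$. For a set $\mathcal{A}$, $2^{\mathcal{A}}$ is its power set; for a collection of sets $\mathcal{B}$, $X_{(\mathcal{B})}=\{X_{\mathcal{A}}:\mathcal{A}\in\mathcal{B}\}$ (so $X_{(\emptyset)}$ is a constant, while $X_{\emptyset}$ is the random variable indexed by the empty set). $R_{\mathcal{K}}=\sum_{k\in\mathcal{K}}R_k$. The set function $\psi$ on $2^{\mathcal{I}_L}$ is $\psi(\mathcal{K})=(|\mathcal{K}|-1)I(X;X_{\emptyset})-H(X_{(2^{\mathcal{K}})}|X)+\sum_{\mathcal{A}\subseteq\mathcal{K}}H(X_{\mathcal{A}}|X_{(2^{\mathcal{A}}-\{\mathcal{A}\})})$. A contra-polymatroid (in the sense of Edmonds) is a set of the form $\{(R_1,\dots,R_L): R_{\mathcal{K}}\ge g(\mathcal{K})\ \forall\,\emptyset\subset\mathcal{K}\subseteq\mathcal{I}_L\}$ where $g:2^{\mathcal{I}_L}\to\mathbb{R}$ satisfies $g(\emptyset)=0$, $g(\mathcal{S})\le g(\mathcal{T})$ whenever $\mathcal{S}\subset\mathcal{T}$,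 and $g(\mathcal{S})+g(\mathcal{T})\le g(\mathcal{S}\cup\mathcal{T})+g(\mathcal{S}\cap\mathcal{T})$ for all $\mathcal{S},\mathcal{T}$. *)

theory Defs
  imports "HOL-Probability.Probability_Mass_Function"
begin

definition ent :: "'w pmf \<Rightarrow> ('w \<Rightarrow> 'v) \<Rightarrow> real" where
  "ent p f = - (\<Sum>v \<in> f ` set_pmf p.
      measure_pmf.prob p {w. f w = v} * log 2 (measure_pmf.prob p {w. f w = v}))"

definition cond_ent :: "'w pmf \<Rightarrow> ('w \<Rightarrow> 'u) \<Rightarrow> ('w \<Rightarrow> 'v) \<Rightarrow> real" where
  "cond_ent p f g = ent p (\<lambda>w. (f w, g w)) - ent p g"

definition mut_info :: "'w pmf \<Rightarrow> ('w \<Rightarrow> 'u) \<Rightarrow> ('w \<Rightarrow> 'v) \<Rightarrow> real" where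
  "mut_info p f g = ent p f + ent p g - ent p (\<lambda>w. (f w, g w))"

definition coll :: "(nat set \<Rightarrow> 'w \<Rightarrow> 'b) \<Rightarrow> nat set set \<Rightarrow> 'w \<Rightarrow> (nat set \<Rightarrow> 'b)" where
  "coll Xs B = (\<lambda>w. restrict (\<lambda>A. Xs A w) B)"

definition psi :: "'w pmf \<Rightarrow> ('w \<Rightarrow> 'a) \<Rightarrow> (nat set \<Rightarrow> 'w \<Rightarrow> 'b) \<Rightarrow> nat set \<Rightarrow> real" where
  "psi p X Xs K =
     (real (card K) - 1) * mut_info p X (Xs {})
     - cond_ent p (coll Xs (Pow K)) X
     + (\<Sum>A \<in> Pow K. cond_ent p (Xs A) (coll Xs (Pow A - {A})))"

text \<open>Vectors in R^L are functions nat => real vanishing outside {1..L}.\<close>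
definition rvec :: "nat \<Rightarrow> (nat \<Rightarrow> real) set" where
  "rvec L = {R. \<forall>i. i \<notin> {1..L} \<longrightarrow> R i = 0}"

definition region :: "nat \<Rightarrow> (nat set \<Rightarrow> real) \<Rightarrow> (nat \<Rightarrow> real) set" where
  "region L g = {R \<in> rvec L. \<forall>K. K \<noteq> {} \<and> K \<subseteq> {1..L} \<longrightarrow> sum R K \<ge> g K}"

definition contra_polymatroid :: "nat \<Rightarrow> (nat \<Rightarrow> real) set \<Rightarrow> bool" where
  "contra_polymatroid L P \<longleftrightarrow> (\<exists>g :: nat set \<Rightarrow> real.
      g {} = 0
    \<and> (\<forall>S T. S \<subset> T \<and> T \<subseteq> {1..L} \<longrightarrow> g S \<le> g T)
    \<and> (\<forall>S T. S \<subseteq> {1..L} \<and> T \<subseteq> {1..L} \<longrightarrow> g S + g T \<le> g (S \<union> T) + g (S \<inter> T))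
    \<and> P = region L g)"

end

theory Submission
  imports Defs
begin

definition mg :: "'t set \<Rightarrow> ('t \<Rightarrow> real) \<Rightarrow> ('t \<Rightarrow> 'u) \<Rightarrow> 'u \<Rightarrow> real" where
  "mg T a g u = (\<Sum>t\<in>{t\<in>T. g t = u}. a t)"

definition Hg :: "'t set \<Rightarrow> ('t \<Rightarrow> real) \<Rightarrow> ('t \<Rightarrow> 'u) \<Rightarrow> real" where
  "Hg T a g = - (\<Sum>u\<in>g`T. mg T a g u * log 2 (mg T a g u))"

lemma Hg_regroup:
  assumes "finite T"
  shows "Hg T a g = - (\<Sum>t\<in>T. a t * log 2 (mg T a g (g t)))"
proof -
  have "(\<Sum>t\<in>T. a t * log 2 (mg T a g (g t))) =
        (\<Sum>u\<in>g`T. \<Sum>t\<in>{t\<in>T. g t = u}. a t * log 2 (mg T a g (g t)))"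
    by (rule sum.image_gen[OF assms])
  also have "\<dots> = (\<Sum>u\<in>g`T. mg T a g u * log 2 (mg T a g u))"
    by (rule sum.cong) (auto simp: mg_def sum_distrib_right)
  finally show ?thesis unfolding Hg_def by simp
qed

lemma mg_pos:
  assumes "finite T" "\<And>t. t \<in> T \<Longrightarrow> a t > 0" "t \<in> T"
  shows "mg T a g (g t) > 0"
  unfolding mg_def using assms by (intro sum_pos) auto

lemma mg_id: "t \<in> T \<Longrightarrow> mg T a id t = a t"
proof -
  assume "t \<in> T"
  then have "{t'\<in>T. id t' = t} = {t}" by auto
  then show ?thesis by (simp add: mg_def)
qed

definition gxz :: "'x \<times> 'y \<times> 'z \<Rightarrow> 'x \<times> 'z" where "gxz t = (fst t, snd (snd t))"
definition gyz :: "'x \<times> 'y \<times> 'z \<Rightarrow> 'y \<times> 'z" where "gyz t = (fst (snd t), snd (snd t))"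
definition gz :: "'x \<times> 'y \<times> 'z \<Rightarrow> 'z" where "gz t = snd (snd t)"

lemma bound_inner:
  fixes T :: "('x \<times> 'y \<times> 'z) set"
  assumes fin: "finite T" and pos: "\<And>t. t \<in> T \<Longrightarrow> a t > 0"
  shows "(\<Sum>t\<in>{t\<in>T. gz t = z}. mg T a gxz (gxz t) * mg T a gyz (gyz t))
          \<le> mg T a gz z * mg T a gz z"
proof -
  define Tz where "Tz = {t\<in>T. gz t = z}"
  have finTz: "finite Tz" using fin unfolding Tz_def by auto
  define \<alpha> where "\<alpha> x = mg T a gxz (x, z)" for x
  define \<beta> where "\<beta> y = mg T a gyz (y, z)" for y
  define \<phi> where "\<phi> t = (fst t, fst (snd t))" for t :: "'x \<times> 'y \<times> 'z"
  have nn: "\<And>t. t \<in> T \<Longrightarrow> a t \<ge> 0" using pos by (simp add: less_imp_le)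
  have \<alpha>nn: "\<alpha> x \<ge> 0" for x unfolding \<alpha>_def mg_def using nn by (intro sum_nonneg) auto
  have \<beta>nn: "\<beta> y \<ge> 0" for y unfolding \<beta>_def mg_def using nn by (intro sum_nonneg) auto
  have injphi: "inj_on \<phi> Tz" unfolding inj_on_def \<phi>_def Tz_def gz_def by (auto simp: prod_eq_iff)
  have "(\<Sum>t\<in>Tz. mg T a gxz (gxz t) * mg T a gyz (gyz t)) = (\<Sum>t\<in>Tz. (\<lambda>(x,y). \<alpha> x * \<beta> y) (\<phi> t))"
    by (rule sum.cong) (auto simp: Tz_def \<alpha>_def \<beta>_def \<phi>_def gxz_def gyz_def gz_def)
  also have "\<dots> = (\<Sum>q\<in>\<phi>`Tz. (\<lambda>(x,y). \<alpha> x * \<beta> y) q)"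
    by (simp add: sum.reindex[OF injphi])
  also have "\<dots> \<le> (\<Sum>q\<in>(fst`Tz) \<times> ((fst \<circ> snd)`Tz). (\<lambda>(x,y). \<alpha> x * \<beta> y) q)"
    by (rule sum_mono2) (auto simp: finTz \<phi>_def \<alpha>nn \<beta>nn)
  also have "\<dots> = (\<Sum>x\<in>fst`Tz. \<alpha> x) * (\<Sum>y\<in>(fst \<circ> snd)`Tz. \<beta> y)"
    by (simp add: sum_product sum.cartesian_product)
  also have "(\<Sum>x\<in>fst`Tz. \<alpha> x) = mg T a gz z"
  proof -
    have "(\<Sum>x\<in>fst`Tz. \<alpha> x) = (\<Sum>x\<in>fst`Tz. \<Sum>t\<in>{t\<in>Tz. fst t = x}. a t)"
      by (rule sum.cong) (auto simp: \<alpha>_def mg_def Tz_def gxz_def gz_def intro!: sum.cong)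
    also have "\<dots> = (\<Sum>t\<in>Tz. a t)" by (rule sum.image_gen[OF finTz, symmetric])
    finally show ?thesis by (simp add: mg_def Tz_def)
  qed
  also have "(\<Sum>y\<in>(fst \<circ> snd)`Tz. \<beta> y) = mg T a gz z"
  proof -
    have "(\<Sum>y\<in>(fst \<circ> snd)`Tz. \<beta> y) = (\<Sum>y\<in>(fst \<circ> snd)`Tz. \<Sum>t\<in>{t\<in>Tz. (fst \<circ> snd) t = y}. a t)"
      by (rule sum.cong) (auto simp: \<beta>_def mg_def Tz_def gyz_def gz_def intro!: sum.cong)
    also have "\<dots> = (\<Sum>t\<in>Tz. a t)" by (rule sum.image_gen[OF finTz, symmetric])
    finally show ?thesis by (simp add: mg_def Tz_def)
  qed
  finally show ?thesis unfolding Tz_def .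
qed

lemma bound:
  fixes T :: "('x \<times> 'y \<times> 'z) set"
  assumes fin: "finite T" and pos: "\<And>t. t \<in> T \<Longrightarrow> a t > 0"
  shows "(\<Sum>t\<in>T. mg T a gxz (gxz t) * mg T a gyz (gyz t) / mg T a gz (gz t)) \<le> (\<Sum>t\<in>T. a t)"
proof -
  have "(\<Sum>t\<in>T. mg T a gxz (gxz t) * mg T a gyz (gyz t) / mg T a gz (gz t))
     = (\<Sum>z\<in>gz`T. \<Sum>t\<in>{t\<in>T. gz t = z}. mg T a gxz (gxz t) * mg T a gyz (gyz t) / mg T a gz (gz t))"
    by (rule sum.image_gen[OF fin])
  also have "\<dots> = (\<Sum>z\<in>gz`T. (\<Sum>t\<in>{t\<in>T. gz t = z}. mg T a gxz (gxz t) * mg T a gyz (gyz t)) / mg T a gz z)"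
    by (rule sum.cong) (auto simp: sum_divide_distrib)
  also have "\<dots> \<le> (\<Sum>z\<in>gz`T. mg T a gz z)"
  proof (rule sum_mono)
    fix z assume "z \<in> gz`T"
    then obtain t where t: "t \<in> T" "z = gz t" by auto
    have cpos: "mg T a gz z > 0" using mg_pos[OF fin pos t(1)] t by simp
    show "(\<Sum>t\<in>{t\<in>T. gz t = z}. mg T a gxz (gxz t) * mg T a gyz (gyz t)) / mg T a gz z \<le> mg T a gz z"
      using bound_inner[OF fin pos, where z=z] cpos by (simp add: divide_le_eq)
  qed
  also have "\<dots> = (\<Sum>t\<in>T. a t)"
    unfolding mg_def by (rule sum.image_gen[OF fin, symmetric])
  finally show ?thesis .
qed

lemma log_lower: "y > 0 \<Longrightarrow> log 2 y \<ge> (1 - 1 / y) / ln 2"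
proof -
  assume y: "y > 0"
  have "ln (1 / y) \<le> 1 / y - 1" using y by (intro ln_le_minus_one) simp
  then have "ln y \<ge> 1 - 1 / y" using y by (simp add: ln_div)
  then show ?thesis by (simp add: log_def divide_right_mono)
qed

lemma core:
  fixes T :: "('x \<times> 'y \<times> 'z) set"
  assumes fin: "finite T" and pos: "\<And>t. t \<in> T \<Longrightarrow> a t > 0"
  shows "Hg T a id + Hg T a gz \<le> Hg T a gxz + Hg T a gyz"
proof -
  define A where "A t = mg T a gxz (gxz t)" for t :: "'x \<times> 'y \<times> 'z"
  define B where "B t = mg T a gyz (gyz t)" for t :: "'x \<times> 'y \<times> 'z"
  define C where "C t = mg T a gz (gz t)" for t :: "'x \<times> 'y \<times> 'z"
  have Ap: "t \<in> T \<Longrightarrow> A t > 0" for t unfolding A_def by (rule mg_pos[OF fin pos])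
  have Bp: "t \<in> T \<Longrightarrow> B t > 0" for t unfolding B_def by (rule mg_pos[OF fin pos])
  have Cp: "t \<in> T \<Longrightarrow> C t > 0" for t unfolding C_def by (rule mg_pos[OF fin pos])
  have step: "a t * log 2 (a t) + a t * log 2 (C t) - a t * log 2 (A t) - a t * log 2 (B t)
      \<ge> (a t - A t * B t / C t) / ln 2" if t: "t \<in> T" for t
  proof -
    have ap: "a t > 0" using pos t .
    have y: "a t * C t / (A t * B t) > 0" using ap Ap[OF t] Bp[OF t] Cp[OF t] by simp
    have "log 2 (a t * C t / (A t * B t)) = log 2 (a t) + log 2 (C t) - log 2 (A t) - log 2 (B t)"
      using ap Ap[OF t] Bp[OF t] Cp[OF t] by (simp add: log_mult log_divide)
    moreover have "log 2 (a t * C t / (A t * B t)) \<ge> (1 - A t * B t / (a t * C t)) / ln 2"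
      using log_lower[OF y] by simp
    ultimately have "log 2 (a t) + log 2 (C t) - log 2 (A t) - log 2 (B t) \<ge> (1 - A t * B t / (a t * C t)) / ln 2"
      by simp
    from mult_left_mono[OF this less_imp_le[OF ap]]
    have "a t * (log 2 (a t) + log 2 (C t) - log 2 (A t) - log 2 (B t)) \<ge> a t * ((1 - A t * B t / (a t * C t)) / ln 2)" .
    moreover have "a t * ((1 - A t * B t / (a t * C t)) / ln 2) = (a t - A t * B t / C t) / ln 2"
      using ap Cp[OF t] by (simp add: field_simps)
    ultimately show ?thesis by (simp add: algebra_simps)
  qed
  have "(\<Sum>t\<in>T. (a t - A t * B t / C t) / ln 2) =
        ((\<Sum>t\<in>T. a t) - (\<Sum>t\<in>T. A t * B t / C t)) / ln 2"
    by (simp add: sum_divide_distrib[symmetric] sum_subtractf)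
  moreover have "(\<Sum>t\<in>T. A t * B t / C t) \<le> (\<Sum>t\<in>T. a t)"
    unfolding A_def B_def C_def by (rule bound[OF fin pos])
  ultimately have "(\<Sum>t\<in>T. (a t - A t * B t / C t) / ln 2) \<ge> 0" by simp
  also have "(\<Sum>t\<in>T. (a t - A t * B t / C t) / ln 2) \<le>
      (\<Sum>t\<in>T. a t * log 2 (a t) + a t * log 2 (C t) - a t * log 2 (A t) - a t * log 2 (B t))"
    by (rule sum_mono) (rule step)
  finally have main: "0 \<le> (\<Sum>t\<in>T. a t * log 2 (a t)) + (\<Sum>t\<in>T. a t * log 2 (C t))
      - (\<Sum>t\<in>T. a t * log 2 (A t)) - (\<Sum>t\<in>T. a t * log 2 (B t))"
    by (simp add: sum_subtractf sum.distrib)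
  have "Hg T a id = - (\<Sum>t\<in>T. a t * log 2 (a t))"
    unfolding Hg_regroup[OF fin] by (auto intro!: sum.cong simp: mg_id)
  moreover have "Hg T a gz = - (\<Sum>t\<in>T. a t * log 2 (C t))" unfolding Hg_regroup[OF fin] C_def ..
  moreover have "Hg T a gxz = - (\<Sum>t\<in>T. a t * log 2 (A t))" unfolding Hg_regroup[OF fin] A_def ..
  moreover have "Hg T a gyz = - (\<Sum>t\<in>T. a t * log 2 (B t))" unfolding Hg_regroup[OF fin] B_def ..
  ultimately show ?thesis using main by linarith
qed


lemma ent_via_map:
  fixes F :: "'w \<Rightarrow> 't" and k :: "'t \<Rightarrow> 'u"
  assumes fin: "finite (F ` set_pmf p)"
  shows "ent p (\<lambda>w. k (F w)) = Hg (set_pmf (map_pmf F p)) (pmf (map_pmf F p)) k"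
proof -
  define q where "q = map_pmf F p"
  have T: "set_pmf q = F ` set_pmf p" by (simp add: q_def)
  have img: "(\<lambda>w. k (F w)) ` set_pmf p = k ` set_pmf q" by (auto simp: T)
  have pr: "measure_pmf.prob p {w. k (F w) = u} = mg (set_pmf q) (pmf q) k u" for u
  proof -
    have "measure_pmf.prob p {w. k (F w) = u} = measure_pmf.prob q {t. k t = u}"
      by (simp add: q_def measure_map_pmf vimage_def)
    also have "\<dots> = measure_pmf.prob q ({t. k t = u} \<inter> set_pmf q)" by (simp add: measure_Int_set_pmf)
    also have "\<dots> = sum (pmf q) ({t. k t = u} \<inter> set_pmf q)"
      by (rule measure_measure_pmf_finite) (use fin T in auto)
    also have "\<dots> = mg (set_pmf q) (pmf q) k u" unfolding mg_def by (rule sum.cong) auto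
    finally show ?thesis .
  qed
  show ?thesis unfolding ent_def Hg_def q_def[symmetric] img pr ..
qed

lemma ent_submod:
  assumes "finite (f ` set_pmf p)" "finite (g ` set_pmf p)" "finite (h ` set_pmf p)"
  shows "ent p (\<lambda>w. (f w, g w, h w)) + ent p h \<le> ent p (\<lambda>w. (f w, h w)) + ent p (\<lambda>w. (g w, h w))"
proof -
  define F where "F w = (f w, g w, h w)" for w
  have fin: "finite (F ` set_pmf p)"
    by (rule finite_subset[where B="f`set_pmf p \<times> g`set_pmf p \<times> h`set_pmf p"]) (auto simp: F_def assms)
  define q where "q = map_pmf F p"
  have finq: "finite (set_pmf q)" using fin by (simp add: q_def)
  have posq: "\<And>t. t \<in> set_pmf q \<Longrightarrow> pmf q t > 0" by (rule pmf_positive)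
  have e1: "ent p (\<lambda>w. (f w, g w, h w)) = Hg (set_pmf q) (pmf q) id"
    using ent_via_map[OF fin, of id] by (simp add: F_def q_def)
  have e2: "ent p h = Hg (set_pmf q) (pmf q) gz"
    using ent_via_map[OF fin, of gz] by (simp add: F_def q_def gz_def)
  have e3: "ent p (\<lambda>w. (f w, h w)) = Hg (set_pmf q) (pmf q) gxz"
    using ent_via_map[OF fin, of gxz] by (simp add: F_def q_def gxz_def)
  have e4: "ent p (\<lambda>w. (g w, h w)) = Hg (set_pmf q) (pmf q) gyz"
    using ent_via_map[OF fin, of gyz] by (simp add: F_def q_def gyz_def)
  show ?thesis unfolding e1 e2 e3 e4 by (rule core[OF finq posq])
qed

lemma ent_same_partition:
  fixes f :: "'w \<Rightarrow> 'u" and g :: "'w \<Rightarrow> 'v"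
  assumes fin: "finite (g ` set_pmf p)"
    and eq: "\<And>w w'. w \<in> set_pmf p \<Longrightarrow> w' \<in> set_pmf p \<Longrightarrow> (f w = f w') = (g w = g w')"
  shows "ent p f = ent p g"
proof -
  let ?S = "set_pmf p"
  define \<phi> where "\<phi> v = f (SOME w. w \<in> ?S \<and> g w = v)" for v
  have \<phi>: "\<phi> (g w) = f w" if "w \<in> ?S" for w
  proof -
    have ex: "\<exists>w'. w' \<in> ?S \<and> g w' = g w" using that by blast
    have "(SOME w'. w' \<in> ?S \<and> g w' = g w) \<in> ?S \<and> g (SOME w'. w' \<in> ?S \<and> g w' = g w) = g w"
      by (rule someI_ex[OF ex])
    then show ?thesis unfolding \<phi>_def using eq that by blast
  qed
  have img: "f ` ?S = \<phi> ` (g ` ?S)" unfolding image_image by (rule image_cong) (simp_all add: \<phi>)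
  have inj: "inj_on \<phi> (g ` ?S)" using \<phi> eq by (auto simp: inj_on_def)
  have pr: "measure_pmf.prob p {w. f w = \<phi> v} = measure_pmf.prob p {w. g w = v}" if v: "v \<in> g ` ?S" for v
  proof -
    obtain w0 where w0: "w0 \<in> ?S" "v = g w0" using v by auto
    have "{w. f w = \<phi> v} \<inter> ?S = {w. g w = v} \<inter> ?S" using \<phi> eq w0 by auto
    then show ?thesis by (metis measure_Int_set_pmf)
  qed
  show ?thesis unfolding ent_def img sum.reindex[OF inj] by (auto intro!: sum.cong simp: pr)
qed

lemma ent_const: "ent p (\<lambda>w. c) = 0"
proof -
  have "set_pmf p \<noteq> {}" by (rule set_pmf_not_empty)
  then have "(\<lambda>w. c) ` set_pmf p = {c}" by auto
  then show ?thesis by (simp add: ent_def)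
qed

definition RR :: "('i \<Rightarrow> 'w \<Rightarrow> 'v) \<Rightarrow> 'i set \<Rightarrow> 'w \<Rightarrow> ('i \<Rightarrow> 'v)" where
  "RR Y D = (\<lambda>w. restrict (\<lambda>i. Y i w) D)"

lemma RR_eq: "(RR Y D w = RR Y D w') = (\<forall>i\<in>D. Y i w = Y i w')"
  unfolding RR_def restrict_def fun_eq_iff by auto

lemma finite_RR:
  assumes "finite D" "\<And>i. i \<in> D \<Longrightarrow> finite (Y i ` S)"
  shows "finite (RR Y D ` S)"
  by (rule finite_subset[where B="PiE D (\<lambda>i. Y i ` S)"]) (auto simp: RR_def assms finite_PiE)

lemma E_submod:
  fixes Y :: "'i \<Rightarrow> 'w \<Rightarrow> 'v"
  assumes U: "finite U" and V: "finite V" and fY: "\<And>i. i \<in> U \<union> V \<Longrightarrow> finite (Y i ` set_pmf p)"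
  shows "ent p (RR Y (U \<union> V)) + ent p (RR Y (U \<inter> V)) \<le> ent p (RR Y U) + ent p (RR Y V)"
proof -
  let ?S = "set_pmf p"
  have fin: "\<And>D. D \<subseteq> U \<union> V \<Longrightarrow> finite (RR Y D ` ?S)"
    by (rule finite_RR) (use U V fY finite_subset in auto)
  have s: "ent p (\<lambda>w. (RR Y (U - V) w, RR Y (V - U) w, RR Y (U \<inter> V) w)) + ent p (RR Y (U \<inter> V))
     \<le> ent p (\<lambda>w. (RR Y (U - V) w, RR Y (U \<inter> V) w)) + ent p (\<lambda>w. (RR Y (V - U) w, RR Y (U \<inter> V) w))"
    by (rule ent_submod) (auto intro!: fin)
  have e1: "ent p (\<lambda>w. (RR Y (U - V) w, RR Y (V - U) w, RR Y (U \<inter> V) w)) = ent p (RR Y (U \<union> V))"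
    by (rule ent_same_partition) (auto intro!: fin simp: RR_eq)
  have e2: "ent p (\<lambda>w. (RR Y (U - V) w, RR Y (U \<inter> V) w)) = ent p (RR Y U)"
    by (rule ent_same_partition) (auto intro!: fin simp: RR_eq)
  have e3: "ent p (\<lambda>w. (RR Y (V - U) w, RR Y (U \<inter> V) w)) = ent p (RR Y V)"
    by (rule ent_same_partition) (auto intro!: fin simp: RR_eq)
  show ?thesis using s unfolding e1 e2 e3 .
qed

lemma E_empty: "ent p (RR Y {}) = 0"
proof -
  have "RR Y {} = (\<lambda>w. (\<lambda>i. undefined))" unfolding RR_def restrict_def by simp
  then show ?thesis by (simp add: ent_const)
qed

definition YY :: "('w \<Rightarrow> 'a) \<Rightarrow> (nat set \<Rightarrow> 'w \<Rightarrow> 'b) \<Rightarrow> nat set option \<Rightarrow> 'w \<Rightarrow> 'a + 'b" where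
  "YY X Xs i = (case i of None \<Rightarrow> (\<lambda>w. Inl (X w)) | Some A \<Rightarrow> (\<lambda>w. Inr (Xs A w)))"

definition EE where "EE p X Xs B = ent p (RR (YY X Xs) B)"
definition ex where "ex p X Xs B = EE p X Xs (insert None (Some ` B))"
definition ee where "ee p X Xs B = EE p X Xs (Some ` B)"
definition cc where "cc p X Xs A = ee p X Xs (Pow A) - ee p X Xs (Pow A - {A})"

lemma YY_simps [simp]: "YY X Xs None w = Inl (X w)" "YY X Xs (Some A) w = Inr (Xs A w)"
  by (simp_all add: YY_def)

lemma coll_eq: "(coll Xs B w = coll Xs B w') = (\<forall>A\<in>B. Xs A w = Xs A w')"
  unfolding coll_def restrict_def fun_eq_iff by auto

lemma fin_YY:
  assumes fX: "finite (X ` set_pmf p)" and fXs: "\<And>K. K \<subseteq> {1..L} \<Longrightarrow> finite (Xs K ` set_pmf p)"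
    and i: "i \<in> insert None (Some ` Pow {1..L})"
  shows "finite (YY X Xs i ` set_pmf p)"
proof (cases i)
  case None
  have "YY X Xs i ` set_pmf p = Inl ` (X ` set_pmf p)" using None by (auto simp: YY_def)
  then show ?thesis using fX by simp
next
  case (Some A)
  then have A: "A \<subseteq> {1..L}" using i by auto
  have "YY X Xs i ` set_pmf p = Inr ` (Xs A ` set_pmf p)" using Some by (auto simp: YY_def)
  then show ?thesis using fXs[OF A] by simp
qed

lemma fin_EE:
  assumes fX: "finite (X ` set_pmf p)" and fXs: "\<And>K. K \<subseteq> {1..L} \<Longrightarrow> finite (Xs K ` set_pmf p)"
    and DD: "D \<subseteq> insert None (Some ` Pow {1..L})"
  shows "finite (RR (YY X Xs) D ` set_pmf p)"
proof (rule finite_RR)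
  show "finite D" by (rule finite_subset[OF DD]) simp
  fix i assume "i \<in> D"
  with DD have ii: "i \<in> insert None (Some ` Pow {1..L})" by (rule subsetD)
  note zz = fin_YY[of X p L Xs i]
  show "finite (YY X Xs i ` set_pmf p)" apply (rule zz) using fX apply -  apply assumption using fXs apply - apply assumption using ii apply assumption done
qed

lemma EE_submod:
  assumes fX: "finite (X ` set_pmf p)" and fXs: "\<And>K. K \<subseteq> {1..L} \<Longrightarrow> finite (Xs K ` set_pmf p)"
    and U: "U \<subseteq> insert None (Some ` Pow {1..L})" and V: "V \<subseteq> insert None (Some ` Pow {1..L})"
  shows "EE p X Xs (U \<union> V) + EE p X Xs (U \<inter> V) \<le> EE p X Xs U + EE p X Xs V"
  unfolding EE_def
proof (rule E_submod)
  show "finite U" by (rule finite_subset[OF U]) simp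
  show "finite V" by (rule finite_subset[OF V]) simp
  fix i assume "i \<in> U \<union> V"
  with Un_least[OF U V] have ii: "i \<in> insert None (Some ` Pow {1..L})" by (rule subsetD)
  note zz = fin_YY[of X p L Xs i]
  show "finite (YY X Xs i ` set_pmf p)" apply (rule zz) using fX apply -  apply assumption using fXs apply - apply assumption using ii apply assumption done
qed

lemma chain:
  assumes fX: "finite (X ` set_pmf p)" and fXs: "\<And>K. K \<subseteq> {1..L} \<Longrightarrow> finite (Xs K ` set_pmf p)"
  assumes C: "C \<subseteq> Pow {1..L}"
    and dC: "\<And>A A'. A \<in> C \<Longrightarrow> A' \<subseteq> A \<Longrightarrow> A' \<in> C"
  shows "B \<subseteq> C \<Longrightarrow> (\<And>A A'. A \<in> B \<Longrightarrow> A' \<subseteq> A \<Longrightarrow> A' \<in> B) \<Longrightarrow>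
    ex p X Xs C - ex p X Xs B \<le> (\<Sum>A\<in>C - B. cc p X Xs A)"
proof (induction "card (C - B)" arbitrary: B rule: less_induct)
  case less
  have finC: "finite C" by (rule finite_subset[OF C]) simp
  show ?case
  proof (cases "C - B = {}")
    case True
    then have "B = C" using less.prems by auto
    then show ?thesis by simp
  next
    case False
    define m where "m = Min (card ` (C - B))"
    have finD: "finite (C - B)" using finC by simp
    have "m \<in> card ` (C - B)" unfolding m_def using finD False by (intro Min_in) auto
    then obtain A where A: "A \<in> C - B" "card A = m" by auto
    have Amin: "card A \<le> card A'" if A': "A' \<in> C - B" for A'
      using A(2) Min_le[OF _ imageI[OF A']] finD unfolding m_def by auto
    have AL: "A \<subseteq> {1..L}" using A C by auto
    have finA: "finite A" using AL by (rule finite_subset) simp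
    have sub: "Pow A - {A} \<subseteq> B"
    proof
      fix A' assume "A' \<in> Pow A - {A}"
      then have ps: "A' \<subset> A" by auto
      then have "card A' < card A" by (rule psubset_card_mono[OF finA])
      moreover have "A' \<in> C" using dC A ps by blast
      ultimately show "A' \<in> B" using Amin by force
    qed
    define B' where "B' = insert A B"
    have lt: "card (C - B') < card (C - B)" using A finD unfolding B'_def by (intro psubset_card_mono) auto
    have B'C: "B' \<subseteq> C" using less.prems A unfolding B'_def by auto
    have dB': "\<And>A1 A'. A1 \<in> B' \<Longrightarrow> A' \<subseteq> A1 \<Longrightarrow> A' \<in> B'"
      using less.prems(2) sub unfolding B'_def by blast
    have IH: "ex p X Xs C - ex p X Xs B' \<le> (\<Sum>A\<in>C - B'. cc p X Xs A)"
      using less.hyps[OF lt B'C dB'] .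
    define U where "U = insert None (Some ` B)"
    define V where "V = Some ` Pow A"
    have UD: "U \<subseteq> insert None (Some ` Pow {1..L})" using less.prems(1) C unfolding U_def by blast
    have VD: "V \<subseteq> insert None (Some ` Pow {1..L})" using AL unfolding V_def by blast
    have UV: "U \<union> V = insert None (Some ` B')" using sub A unfolding U_def V_def B'_def by auto
    have UiV: "U \<inter> V = Some ` (Pow A - {A})" using sub A unfolding U_def V_def by auto
    have "EE p X Xs (U \<union> V) + EE p X Xs (U \<inter> V) \<le> EE p X Xs U + EE p X Xs V"
      by (rule EE_submod[OF fX fXs UD VD])
    then have step: "ex p X Xs B' - ex p X Xs B \<le> cc p X Xs A"
      unfolding UV UiV unfolding U_def V_def ex_def cc_def ee_def by simp
    have "C - B' = (C - B) - {A}" unfolding B'_def by auto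
    then have "(\<Sum>A\<in>C - B. cc p X Xs A) = cc p X Xs A + (\<Sum>A\<in>C - B'. cc p X Xs A)"
      using sum.remove[OF finD A(1)] by simp
    then show ?thesis using IH step by linarith
  qed
qed

lemma psi_eq:
  assumes fX: "finite (X ` set_pmf p)" and fXs: "\<And>K. K \<subseteq> {1..L} \<Longrightarrow> finite (Xs K ` set_pmf p)"
    and K: "K \<subseteq> {1..L}"
  shows "psi p X Xs K = (real (card K) - 1) *
      (EE p X Xs {None} + EE p X Xs {Some {}} - EE p X Xs {None, Some {}})
      - ex p X Xs (Pow K) + EE p X Xs {None} + (\<Sum>A\<in>Pow K. cc p X Xs A)"
proof -
  note fE = fin_EE[OF fX fXs]
  have h1: "ent p X = EE p X Xs {None}" unfolding EE_def
    by (rule ent_same_partition) (auto intro!: fE simp: RR_eq)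
  have h2: "ent p (Xs {}) = EE p X Xs {Some {}}" unfolding EE_def
    by (rule ent_same_partition) (auto intro!: fE simp: RR_eq)
  have h3: "ent p (\<lambda>w. (X w, Xs {} w)) = EE p X Xs {None, Some {}}" unfolding EE_def
    by (rule ent_same_partition) (auto intro!: fE simp: RR_eq)
  have h4: "ent p (\<lambda>w. (coll Xs (Pow K) w, X w)) = ex p X Xs (Pow K)" unfolding EE_def ex_def
    by (rule ent_same_partition) (use K in \<open>auto intro!: fE simp: RR_eq coll_eq\<close>)
  have h5: "cond_ent p (Xs A) (coll Xs (Pow A - {A})) = cc p X Xs A" if A: "A \<in> Pow K" for A
  proof -
    have e1: "ent p (\<lambda>w. (Xs A w, coll Xs (Pow A - {A}) w)) = ee p X Xs (Pow A)" unfolding EE_def ee_def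
      by (rule ent_same_partition) (use K A in \<open>auto intro!: fE simp: RR_eq coll_eq\<close>)
    have e2: "ent p (coll Xs (Pow A - {A})) = ee p X Xs (Pow A - {A})" unfolding EE_def ee_def
      by (rule ent_same_partition) (use K A in \<open>auto intro!: fE simp: RR_eq coll_eq\<close>)
    show ?thesis unfolding cond_ent_def cc_def e1 e2 ..
  qed
  have hs: "(\<Sum>A\<in>Pow K. cond_ent p (Xs A) (coll Xs (Pow A - {A}))) = (\<Sum>A\<in>Pow K. cc p X Xs A)"
    by (rule sum.cong[OF refl h5])
  show ?thesis unfolding psi_def hs unfolding mut_info_def cond_ent_def h1 h2 h3 h4 by simp
qed

theorem lemma2:
  fixes L :: nat and p :: "'w pmf" and X :: "'w \<Rightarrow> 'a" and Xs :: "nat set \<Rightarrow> 'w \<Rightarrow> 'b"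
  assumes "L > 0"
    and "finite (X ` set_pmf p)"
    and "\<And>K. K \<subseteq> {1..L} \<Longrightarrow> finite (Xs K ` set_pmf p)"
  shows "contra_polymatroid L (region L (psi p X Xs))"
proof -
  note fX = assms(2) and fXs = assms(3)
  define I0 where "I0 = EE p X Xs {None} + EE p X Xs {Some {}} - EE p X Xs {None, Some {}}"
  have I0: "I0 \<ge> 0"
  proof -
    have "EE p X Xs ({None} \<union> {Some {}}) + EE p X Xs ({None} \<inter> {Some {}}) \<le> EE p X Xs {None} + EE p X Xs {Some {}}"
      by (rule EE_submod[of X p L Xs]) (use fX fXs in auto)
    moreover have "EE p X Xs ({None} \<inter> {Some {}}) = 0" by (simp add: EE_def E_empty)
    moreover have "EE p X Xs ({None} \<union> {Some {}}) = EE p X Xs {None, Some {}}" by (rule arg_cong) auto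
    ultimately show ?thesis unfolding I0_def by linarith
  qed
  have pe: "psi p X Xs K = (real (card K) - 1) * I0 - ex p X Xs (Pow K) + EE p X Xs {None}
      + (\<Sum>A\<in>Pow K. cc p X Xs A)" if K: "K \<subseteq> {1..L}" for K
    unfolding I0_def by (rule psi_eq[of X p L Xs]) (use fX fXs K in auto)
  have g0: "psi p X Xs {} = 0"
  proof -
    have "psi p X Xs {} = (real (card ({}::nat set)) - 1) * I0 - ex p X Xs (Pow {}) + EE p X Xs {None}
      + (\<Sum>A\<in>Pow {}. cc p X Xs A)" by (rule pe) simp
    also have "\<dots> = 0"
      by (simp add: I0_def ex_def cc_def ee_def EE_def E_empty insert_commute)
    finally show ?thesis .
  qed
  have finL: "\<And>S. S \<subseteq> {1..L} \<Longrightarrow> finite S" using finite_subset by blast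
  have mono: "psi p X Xs S \<le> psi p X Xs T" if ST: "S \<subset> T" "T \<subseteq> {1..L}" for S T
  proof -
    have S: "S \<subseteq> {1..L}" using ST by auto
    have ch: "ex p X Xs (Pow T) - ex p X Xs (Pow S) \<le> (\<Sum>A\<in>Pow T - Pow S. cc p X Xs A)"
      by (rule chain[of X p L Xs]) (use fX fXs ST in auto)
    have sm: "(\<Sum>A\<in>Pow T. cc p X Xs A) = (\<Sum>A\<in>Pow T - Pow S. cc p X Xs A) + (\<Sum>A\<in>Pow S. cc p X Xs A)"
      by (rule sum.subset_diff) (use ST finL in auto)
    have "card S \<le> card T" using ST finL by (intro card_mono) auto
    then have "(real (card S) - 1) * I0 \<le> (real (card T) - 1) * I0"
      by (intro mult_right_mono I0) simp
    then show ?thesis unfolding pe[OF S] pe[OF ST(2)] using ch sm by linarith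
  qed
  have sup: "psi p X Xs S + psi p X Xs T \<le> psi p X Xs (S \<union> T) + psi p X Xs (S \<inter> T)"
    if S: "S \<subseteq> {1..L}" and T: "T \<subseteq> {1..L}" for S T
  proof -
    have SuT: "S \<union> T \<subseteq> {1..L}" and SiT: "S \<inter> T \<subseteq> {1..L}" using S T by auto
    define U where "U = insert None (Some ` Pow S)"
    define V where "V = insert None (Some ` Pow T)"
    have UV: "U \<union> V = insert None (Some ` (Pow S \<union> Pow T))" unfolding U_def V_def by auto
    have UiV: "U \<inter> V = insert None (Some ` (Pow (S \<inter> T)))" unfolding U_def V_def by auto
    have "EE p X Xs (U \<union> V) + EE p X Xs (U \<inter> V) \<le> EE p X Xs U + EE p X Xs V"
      by (rule EE_submod[of X p L Xs]) (use fX fXs S T in \<open>auto simp: U_def V_def\<close>)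
    then have sub: "ex p X Xs (Pow S \<union> Pow T) + ex p X Xs (Pow (S \<inter> T)) \<le> ex p X Xs (Pow S) + ex p X Xs (Pow T)"
      unfolding UV UiV unfolding U_def V_def ex_def .
    have ch: "ex p X Xs (Pow (S \<union> T)) - ex p X Xs (Pow S \<union> Pow T) \<le> (\<Sum>A\<in>Pow (S \<union> T) - (Pow S \<union> Pow T). cc p X Xs A)"
      by (rule chain[of X p L Xs]) (use fX fXs S T in auto)
    have finST: "finite (S \<union> T)" using SuT finL by blast
    have s1: "(\<Sum>A\<in>Pow (S \<union> T). cc p X Xs A) = (\<Sum>A\<in>Pow (S \<union> T) - (Pow S \<union> Pow T). cc p X Xs A) + (\<Sum>A\<in>Pow S \<union> Pow T. cc p X Xs A)"
      by (rule sum.subset_diff) (use finST in auto)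
    have s2: "(\<Sum>A\<in>Pow S \<union> Pow T. cc p X Xs A) + (\<Sum>A\<in>Pow S \<inter> Pow T. cc p X Xs A) = (\<Sum>A\<in>Pow S. cc p X Xs A) + (\<Sum>A\<in>Pow T. cc p X Xs A)"
      by (rule sum.union_inter) (use S T finL in auto)
    have PI: "Pow S \<inter> Pow T = Pow (S \<inter> T)" by auto
    have "card (S \<union> T) + card (S \<inter> T) = card S + card T"
      using card_Un_Int[of S T] S T finL by auto
    then have ceq: "real (card (S \<union> T)) + real (card (S \<inter> T)) = real (card S) + real (card T)"
      by (metis of_nat_add)
    have "(real (card (S \<union> T)) - 1) * I0 + (real (card (S \<inter> T)) - 1) * I0
        = (real (card (S \<union> T)) + real (card (S \<inter> T)) - 2) * I0" by (simp add: algebra_simps)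
    also have "\<dots> = (real (card S) + real (card T) - 2) * I0" using ceq by simp
    also have "\<dots> = (real (card S) - 1) * I0 + (real (card T) - 1) * I0" by (simp add: algebra_simps)
    finally have cc_eq: "(real (card (S \<union> T)) - 1) * I0 + (real (card (S \<inter> T)) - 1) * I0
        = (real (card S) - 1) * I0 + (real (card T) - 1) * I0" .
    show ?thesis unfolding pe[OF S] pe[OF T] pe[OF SuT] pe[OF SiT]
      using sub ch s1 s2 cc_eq unfolding PI by linarith
  qed
  show ?thesis unfolding contra_polymatroid_def
    by (intro exI[of _ "psi p X Xs"]) (use g0 mono sup in auto)
qed

end
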